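(* Let $R$ be an associative ring with identity and $M$ a left $R$-module which is projective in $\sigma[M]$. Let $\mu\colon\Lambda^{fi}(M)\to\Lambda^{fi}(M)$ be given by $\mu(N)=\sum\{K\in\Lambda^{fi}(M)\mid \mathcal{U}(K)\subseteq\mathcal{U}(N)\}$. Then for $N\in\Lambda^{fi}(M)$, $\mu(N)=N$ if and only if $N$ is semiprime in $M$ or $N=M$.
   Context: $\Lambda^{fi}(M)$ is the set of fully invariant submodules of $M$. For $N,L\leq M$, $N_ML=\sum\{f(N)\mid f\in\mathrm{Hom}_R(M,L)\}$. $LgSpec(M)$ is the set of submodules $P\neq M$ such that for all $N,L\in\Lambda^{fi}(M)$, $N_ML\subseteq P$ implies $N\subseteq P$ or $L\subseteq P$; for $N\in\Lambda^{fi}(M)$, $\mathcal{U}(N)=\{P\in LgSpec(M)\mid N\nsubseteq P\}$. A submodule $N\in\Lambda^{fi}(M)$ with $N\neq M$ is semiprime in $M$ if whenever $K\in\Lambda^{fi}(M)$ and $K_MK\subseteq N$, then $K\subseteq N$. *)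

theory Defs
  imports "HOL-Algebra.Module"
begin

text \<open>HOL-Algebra's locale module requires a commutative ring, so left modules over
  an arbitrary ring with identity are defined here with the same axioms.\<close>

definition lmodule :: "'r ring \<Rightarrow> ('r, 'a) module \<Rightarrow> bool" where
  "lmodule R M \<longleftrightarrow> ring R \<and> abelian_group M \<and>
     (\<forall>a\<in>carrier R. \<forall>x\<in>carrier M. a \<odot>\<^bsub>M\<^esub> x \<in> carrier M) \<and>
     (\<forall>a\<in>carrier R. \<forall>b\<in>carrier R. \<forall>x\<in>carrier M.
        (a \<oplus>\<^bsub>R\<^esub> b) \<odot>\<^bsub>M\<^esub> x = a \<odot>\<^bsub>M\<^esub> x \<oplus>\<^bsub>M\<^esub> b \<odot>\<^bsub>M\<^esub> x) \<and>
     (\<forall>a\<in>carrier R. \<forall>x\<in>carrier M. \<forall>y\<in>carrier M.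
        a \<odot>\<^bsub>M\<^esub> (x \<oplus>\<^bsub>M\<^esub> y) = a \<odot>\<^bsub>M\<^esub> x \<oplus>\<^bsub>M\<^esub> a \<odot>\<^bsub>M\<^esub> y) \<and>
     (\<forall>a\<in>carrier R. \<forall>b\<in>carrier R. \<forall>x\<in>carrier M.
        (a \<otimes>\<^bsub>R\<^esub> b) \<odot>\<^bsub>M\<^esub> x = a \<odot>\<^bsub>M\<^esub> (b \<odot>\<^bsub>M\<^esub> x)) \<and>
     (\<forall>x\<in>carrier M. \<one>\<^bsub>R\<^esub> \<odot>\<^bsub>M\<^esub> x = x)"

definition submod :: "'r ring \<Rightarrow> ('r, 'a) module \<Rightarrow> 'a set \<Rightarrow> bool" where
  "submod R M N \<longleftrightarrow> N \<subseteq> carrier M \<and> \<zero>\<^bsub>M\<^esub> \<in> N \<and>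
     (\<forall>x\<in>N. \<forall>y\<in>N. x \<oplus>\<^bsub>M\<^esub> y \<in> N) \<and>
     (\<forall>a\<in>carrier R. \<forall>x\<in>N. a \<odot>\<^bsub>M\<^esub> x \<in> N)"

text \<open>Submodule generated by a subset S; the sum of a family of submodules is the
  submodule generated by their union.\<close>

definition gen_submod :: "'r ring \<Rightarrow> ('r, 'a) module \<Rightarrow> 'a set \<Rightarrow> 'a set" where
  "gen_submod R M S = \<Inter>{K. submod R M K \<and> S \<subseteq> K}"

definition lhom_on :: "'r ring \<Rightarrow> ('r, 'a) module \<Rightarrow> 'a set \<Rightarrow> ('r, 'b) module \<Rightarrow> ('a \<Rightarrow> 'b) set" where
  "lhom_on R M S M' = {f. (\<forall>x\<in>S. f x \<in> carrier M') \<and>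
     (\<forall>x\<in>S. \<forall>y\<in>S. f (x \<oplus>\<^bsub>M\<^esub> y) = f x \<oplus>\<^bsub>M'\<^esub> f y) \<and>
     (\<forall>a\<in>carrier R. \<forall>x\<in>S. f (a \<odot>\<^bsub>M\<^esub> x) = a \<odot>\<^bsub>M'\<^esub> f x)}"

abbreviation lhom :: "'r ring \<Rightarrow> ('r, 'a) module \<Rightarrow> ('r, 'b) module \<Rightarrow> ('a \<Rightarrow> 'b) set" where
  "lhom R M M' \<equiv> lhom_on R M (carrier M) M'"

definition dsum :: "('r, 'a) module \<Rightarrow> ('r, 'i \<Rightarrow> 'a) module" where
  "dsum M = \<lparr> carrier = {f. (\<forall>i. f i \<in> carrier M) \<and> finite {i. f i \<noteq> \<zero>\<^bsub>M\<^esub>}},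
              mult = (\<lambda>f g. f), one = (\<lambda>i. \<zero>\<^bsub>M\<^esub>),
              zero = (\<lambda>i. \<zero>\<^bsub>M\<^esub>),
              add = (\<lambda>f g i. f i \<oplus>\<^bsub>M\<^esub> g i),
              smult = (\<lambda>a f i. a \<odot>\<^bsub>M\<^esub> f i) \<rparr>"

text \<open>N belongs to sigma[M] iff N is a factor module of a submodule of a direct sum
  M^(Lambda) of copies of M.  The index set is taken inside the carrier type of N
  (a subset of UNIV is covered since we sum over all of UNIV with finite support).\<close>

definition in_sigma :: "'r ring \<Rightarrow> ('r, 'a) module \<Rightarrow> ('r, 'c) module \<Rightarrow> bool" where
  "in_sigma R M N \<longleftrightarrow> lmodule R N \<and>
     (\<exists>U h. submod R (dsum M :: ('r, 'c \<Rightarrow> 'a) module) U \<and>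
            h \<in> lhom_on R (dsum M :: ('r, 'c \<Rightarrow> 'a) module) U N \<and> h ` U = carrier N)"

definition proj_sigma :: "'r ring \<Rightarrow> ('r, 'a) module \<Rightarrow> bool" where
  "proj_sigma R M \<longleftrightarrow>
     (\<forall>(A :: ('r, ('r \<times> 'a) list) module) (B :: ('r, ('r \<times> 'a) list) module).
        in_sigma R M A \<longrightarrow> in_sigma R M B \<longrightarrow>
        (\<forall>g\<in>lhom R A B. g ` carrier A = carrier B \<longrightarrow>
          (\<forall>f\<in>lhom R M B. \<exists>h\<in>lhom R M A. \<forall>x\<in>carrier M. g (h x) = f x)))"

definition fi_submods :: "'r ring \<Rightarrow> ('r, 'a) module \<Rightarrow> 'a set set" where
  "fi_submods R M = {N. submod R M N \<and> (\<forall>f\<in>lhom R M M. f ` N \<subseteq> N)}"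

text \<open>N_M L = sum of f(N) over f in Hom_R(M, L), with Hom_R(M,L) = endomorphisms of M
  with image in L.\<close>

definition mprod :: "'r ring \<Rightarrow> ('r, 'a) module \<Rightarrow> 'a set \<Rightarrow> 'a set \<Rightarrow> 'a set" where
  "mprod R M N L = gen_submod R M (\<Union>{f ` N | f. f \<in> lhom R M M \<and> f ` carrier M \<subseteq> L})"

definition LgSpec :: "'r ring \<Rightarrow> ('r, 'a) module \<Rightarrow> 'a set set" where
  "LgSpec R M = {P. submod R M P \<and> P \<noteq> carrier M \<and>
     (\<forall>N\<in>fi_submods R M. \<forall>L\<in>fi_submods R M.
        mprod R M N L \<subseteq> P \<longrightarrow> N \<subseteq> P \<or> L \<subseteq> P)}"

definition Uopen :: "'r ring \<Rightarrow> ('r, 'a) module \<Rightarrow> 'a set \<Rightarrow> 'a set set" where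
  "Uopen R M N = {P \<in> LgSpec R M. \<not> N \<subseteq> P}"

definition semiprime_in :: "'r ring \<Rightarrow> ('r, 'a) module \<Rightarrow> 'a set \<Rightarrow> bool" where
  "semiprime_in R M N \<longleftrightarrow> N \<in> fi_submods R M \<and> N \<noteq> carrier M \<and>
     (\<forall>K\<in>fi_submods R M. mprod R M K K \<subseteq> N \<longrightarrow> K \<subseteq> N)"

definition mu :: "'r ring \<Rightarrow> ('r, 'a) module \<Rightarrow> 'a set \<Rightarrow> 'a set" where
  "mu R M N = gen_submod R M (\<Union>{K \<in> fi_submods R M. Uopen R M K \<subseteq> Uopen R M N})"

end

theory Submission
  imports Defs
begin


locale lmod =
  fixes R :: "'r ring" and M :: "('r,'a) module"
  assumes lm: "lmodule R M"
begin

lemma R_ring: "ring R" using lm by (simp add: lmodule_def)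
lemma M_ag: "abelian_group M" using lm by (simp add: lmodule_def)

sublocale R: ring R by (rule R_ring)
sublocale M: abelian_group M by (rule M_ag)

lemma smult_closed[simp,intro]: "a \<in> carrier R \<Longrightarrow> x \<in> carrier M \<Longrightarrow> a \<odot>\<^bsub>M\<^esub> x \<in> carrier M"
  using lm by (simp add: lmodule_def)
lemma smult_ldistr: "a \<in> carrier R \<Longrightarrow> b \<in> carrier R \<Longrightarrow> x \<in> carrier M \<Longrightarrow>
   (a \<oplus>\<^bsub>R\<^esub> b) \<odot>\<^bsub>M\<^esub> x = a \<odot>\<^bsub>M\<^esub> x \<oplus>\<^bsub>M\<^esub> b \<odot>\<^bsub>M\<^esub> x"
  using lm by (simp add: lmodule_def)
lemma smult_rdistr: "a \<in> carrier R \<Longrightarrow> x \<in> carrier M \<Longrightarrow> y \<in> carrier M \<Longrightarrow>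
   a \<odot>\<^bsub>M\<^esub> (x \<oplus>\<^bsub>M\<^esub> y) = a \<odot>\<^bsub>M\<^esub> x \<oplus>\<^bsub>M\<^esub> a \<odot>\<^bsub>M\<^esub> y"
  using lm by (simp add: lmodule_def)
lemma smult_assoc: "a \<in> carrier R \<Longrightarrow> b \<in> carrier R \<Longrightarrow> x \<in> carrier M \<Longrightarrow>
   (a \<otimes>\<^bsub>R\<^esub> b) \<odot>\<^bsub>M\<^esub> x = a \<odot>\<^bsub>M\<^esub> (b \<odot>\<^bsub>M\<^esub> x)"
  using lm by (simp add: lmodule_def)
lemma smult_one[simp]: "x \<in> carrier M \<Longrightarrow> \<one>\<^bsub>R\<^esub> \<odot>\<^bsub>M\<^esub> x = x"
  using lm by (simp add: lmodule_def)

lemma smult_zero[simp]: "a \<in> carrier R \<Longrightarrow> a \<odot>\<^bsub>M\<^esub> \<zero>\<^bsub>M\<^esub> = \<zero>\<^bsub>M\<^esub>"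
proof -
  assume a: "a \<in> carrier R"
  have "a \<odot>\<^bsub>M\<^esub> \<zero>\<^bsub>M\<^esub> = a \<odot>\<^bsub>M\<^esub> \<zero>\<^bsub>M\<^esub> \<oplus>\<^bsub>M\<^esub> a \<odot>\<^bsub>M\<^esub> \<zero>\<^bsub>M\<^esub>"
    using smult_rdistr[OF a, of "\<zero>\<^bsub>M\<^esub>" "\<zero>\<^bsub>M\<^esub>"] by simp
  then show ?thesis using a M.add.l_cancel_one' by simp
qed

lemma zero_smult[simp]: "x \<in> carrier M \<Longrightarrow> \<zero>\<^bsub>R\<^esub> \<odot>\<^bsub>M\<^esub> x = \<zero>\<^bsub>M\<^esub>"
proof -
  assume x: "x \<in> carrier M"
  have "\<zero>\<^bsub>R\<^esub> \<odot>\<^bsub>M\<^esub> x = \<zero>\<^bsub>R\<^esub> \<odot>\<^bsub>M\<^esub> x \<oplus>\<^bsub>M\<^esub> \<zero>\<^bsub>R\<^esub> \<odot>\<^bsub>M\<^esub> x"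
    using smult_ldistr[of "\<zero>\<^bsub>R\<^esub>" "\<zero>\<^bsub>R\<^esub>" x] x by simp
  then show ?thesis using x M.add.l_cancel_one' by simp
qed

lemma smult_neg: "a \<in> carrier R \<Longrightarrow> x \<in> carrier M \<Longrightarrow> a \<odot>\<^bsub>M\<^esub> (\<ominus>\<^bsub>M\<^esub> x) = \<ominus>\<^bsub>M\<^esub> (a \<odot>\<^bsub>M\<^esub> x)"
proof -
  assume a: "a \<in> carrier R" and x: "x \<in> carrier M"
  have "a \<odot>\<^bsub>M\<^esub> (\<ominus>\<^bsub>M\<^esub> x) \<oplus>\<^bsub>M\<^esub> a \<odot>\<^bsub>M\<^esub> x = \<zero>\<^bsub>M\<^esub>"
    using smult_rdistr[OF a, of "\<ominus>\<^bsub>M\<^esub> x" x] a x by (simp add: M.l_neg)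
  from M.minus_equality[OF this] show ?thesis using a x by simp
qed

lemma neg_one_smult: "x \<in> carrier M \<Longrightarrow> (\<ominus>\<^bsub>R\<^esub> \<one>\<^bsub>R\<^esub>) \<odot>\<^bsub>M\<^esub> x = \<ominus>\<^bsub>M\<^esub> x"
proof -
  assume x: "x \<in> carrier M"
  have "(\<ominus>\<^bsub>R\<^esub> \<one>\<^bsub>R\<^esub>) \<odot>\<^bsub>M\<^esub> x \<oplus>\<^bsub>M\<^esub> x = \<zero>\<^bsub>M\<^esub>"
    using smult_ldistr[of "\<ominus>\<^bsub>R\<^esub> \<one>\<^bsub>R\<^esub>" "\<one>\<^bsub>R\<^esub>" x] x by (simp add: R.l_neg)
  from M.minus_equality[OF this] show ?thesis using x by simp
qed

lemma smult_minus: "a \<in> carrier R \<Longrightarrow> x \<in> carrier M \<Longrightarrow> y \<in> carrier M \<Longrightarrow>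
   a \<odot>\<^bsub>M\<^esub> (x \<ominus>\<^bsub>M\<^esub> y) = a \<odot>\<^bsub>M\<^esub> x \<ominus>\<^bsub>M\<^esub> a \<odot>\<^bsub>M\<^esub> y"
  by (simp add: M.minus_eq smult_rdistr smult_neg)

end



definition splus :: "('r,'a) module \<Rightarrow> 'a set \<Rightarrow> 'a set \<Rightarrow> 'a set" where
  "splus M A P = {a \<oplus>\<^bsub>M\<^esub> p | a p. a \<in> A \<and> p \<in> P}"

definition figen :: "'r ring \<Rightarrow> ('r,'a) module \<Rightarrow> 'a \<Rightarrow> 'a set" where
  "figen R M x = gen_submod R M {f x | f. f \<in> lhom R M M}"

context lmod begin

lemma submodD:
  assumes "submod R M N"
  shows "N \<subseteq> carrier M" "\<zero>\<^bsub>M\<^esub> \<in> N" "\<And>x y. x \<in> N \<Longrightarrow> y \<in> N \<Longrightarrow> x \<oplus>\<^bsub>M\<^esub> y \<in> N"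
    "\<And>a x. a \<in> carrier R \<Longrightarrow> x \<in> N \<Longrightarrow> a \<odot>\<^bsub>M\<^esub> x \<in> N"
  using assms by (auto simp: submod_def)

lemma submod_neg: "submod R M N \<Longrightarrow> x \<in> N \<Longrightarrow> \<ominus>\<^bsub>M\<^esub> x \<in> N"
proof -
  assume N: "submod R M N" and x: "x \<in> N"
  have xc: "x \<in> carrier M" using submodD(1)[OF N] x by auto
  have "(\<ominus>\<^bsub>R\<^esub> \<one>\<^bsub>R\<^esub>) \<odot>\<^bsub>M\<^esub> x \<in> N" by (rule submodD(4)[OF N _ x]) simp
  then show ?thesis using neg_one_smult[OF xc] by simp
qed

lemma submod_minus: "submod R M N \<Longrightarrow> x \<in> N \<Longrightarrow> y \<in> N \<Longrightarrow> x \<ominus>\<^bsub>M\<^esub> y \<in> N"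
  by (simp add: M.minus_eq submod_neg submodD)

lemma submod_carrier: "submod R M (carrier M)"
  by (auto simp: submod_def)

lemma submod_zero: "submod R M {\<zero>\<^bsub>M\<^esub>}"
  by (auto simp: submod_def)

lemma gen_le: "submod R M K \<Longrightarrow> S \<subseteq> K \<Longrightarrow> gen_submod R M S \<subseteq> K"
  by (auto simp: gen_submod_def)

lemma gen_ge: "S \<subseteq> gen_submod R M S"
  by (auto simp: gen_submod_def)

lemma gen_carrier: "gen_submod R M S \<subseteq> carrier M \<or> \<not> S \<subseteq> carrier M"
  by (auto simp: gen_submod_def submod_carrier)

lemma gen_submod: "S \<subseteq> carrier M \<Longrightarrow> submod R M (gen_submod R M S)"
  unfolding submod_def gen_submod_def
  using submod_carrier by (auto simp: submod_def)

lemma gen_sub_carrier: "S \<subseteq> carrier M \<Longrightarrow> gen_submod R M S \<subseteq> carrier M"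
  using gen_carrier by blast

lemma homD:
  assumes "f \<in> lhom R M M"
  shows "\<And>x. x \<in> carrier M \<Longrightarrow> f x \<in> carrier M"
    "\<And>x y. x \<in> carrier M \<Longrightarrow> y \<in> carrier M \<Longrightarrow> f (x \<oplus>\<^bsub>M\<^esub> y) = f x \<oplus>\<^bsub>M\<^esub> f y"
    "\<And>a x. a \<in> carrier R \<Longrightarrow> x \<in> carrier M \<Longrightarrow> f (a \<odot>\<^bsub>M\<^esub> x) = a \<odot>\<^bsub>M\<^esub> f x"
  using assms by (auto simp: lhom_on_def)

lemma hom_zero: "f \<in> lhom R M M \<Longrightarrow> f \<zero>\<^bsub>M\<^esub> = \<zero>\<^bsub>M\<^esub>"
proof -
  assume f: "f \<in> lhom R M M"
  have "f (\<zero>\<^bsub>R\<^esub> \<odot>\<^bsub>M\<^esub> \<zero>\<^bsub>M\<^esub>) = \<zero>\<^bsub>R\<^esub> \<odot>\<^bsub>M\<^esub> f \<zero>\<^bsub>M\<^esub>"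
    by (rule homD(3)[OF f]) auto
  then show ?thesis using homD(1)[OF f, of "\<zero>\<^bsub>M\<^esub>"] by simp
qed

lemma hom_neg: "f \<in> lhom R M M \<Longrightarrow> x \<in> carrier M \<Longrightarrow> f (\<ominus>\<^bsub>M\<^esub> x) = \<ominus>\<^bsub>M\<^esub> f x"
proof -
  assume f: "f \<in> lhom R M M" and x: "x \<in> carrier M"
  have "f ((\<ominus>\<^bsub>R\<^esub> \<one>\<^bsub>R\<^esub>) \<odot>\<^bsub>M\<^esub> x) = (\<ominus>\<^bsub>R\<^esub> \<one>\<^bsub>R\<^esub>) \<odot>\<^bsub>M\<^esub> f x"
    by (rule homD(3)[OF f _ x]) simp
  then show ?thesis using homD(1)[OF f x] x by (simp add: neg_one_smult)
qed

lemma hom_minus: "f \<in> lhom R M M \<Longrightarrow> x \<in> carrier M \<Longrightarrow> y \<in> carrier M \<Longrightarrow> f (x \<ominus>\<^bsub>M\<^esub> y) = f x \<ominus>\<^bsub>M\<^esub> f y"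
  by (simp add: M.minus_eq homD(2) hom_neg)

lemma hom_id: "(\<lambda>x. x) \<in> lhom R M M"
  by (auto simp: lhom_on_def)

lemma hom_comp: "f \<in> lhom R M M \<Longrightarrow> g \<in> lhom R M M \<Longrightarrow> (\<lambda>x. g (f x)) \<in> lhom R M M"
  by (auto simp: lhom_on_def)

lemma hom_gen:
  assumes f: "f \<in> lhom R M M" and S: "S \<subseteq> carrier M"
  shows "f ` gen_submod R M S \<subseteq> gen_submod R M (f ` S)"
proof -
  have fS: "f ` S \<subseteq> carrier M" using S homD(1)[OF f] by auto
  let ?G = "gen_submod R M (f ` S)"
  have G: "submod R M ?G" by (rule gen_submod[OF fS])
  let ?K = "{x \<in> carrier M. f x \<in> ?G}"
  have "submod R M ?K"
    unfolding submod_def using submodD[OF G] homD[OF f] hom_zero[OF f] by auto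
  moreover have "S \<subseteq> ?K" using S gen_ge[of "f ` S"] by auto
  ultimately have "gen_submod R M S \<subseteq> ?K" by (rule gen_le)
  then show ?thesis by auto
qed

lemma fiD: "N \<in> fi_submods R M \<Longrightarrow> submod R M N"
  "N \<in> fi_submods R M \<Longrightarrow> f \<in> lhom R M M \<Longrightarrow> x \<in> N \<Longrightarrow> f x \<in> N"
  by (auto simp: fi_submods_def)

lemma fiI: "submod R M N \<Longrightarrow> (\<And>f x. f \<in> lhom R M M \<Longrightarrow> x \<in> N \<Longrightarrow> f x \<in> N) \<Longrightarrow> N \<in> fi_submods R M"
  by (auto simp: fi_submods_def)

lemma fi_carrier: "carrier M \<in> fi_submods R M"
  by (rule fiI[OF submod_carrier]) (rule homD(1))

lemma gen_fi:
  assumes S: "S \<subseteq> carrier M" and inv: "\<And>f x. f \<in> lhom R M M \<Longrightarrow> x \<in> S \<Longrightarrow> f x \<in> S"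
  shows "gen_submod R M S \<in> fi_submods R M"
proof (rule fiI[OF gen_submod[OF S]])
  fix f x assume f: "f \<in> lhom R M M" and x: "x \<in> gen_submod R M S"
  have "f x \<in> gen_submod R M (f ` S)" using hom_gen[OF f S] x by auto
  moreover have "gen_submod R M (f ` S) \<subseteq> gen_submod R M S"
    using inv[OF f] gen_submod[OF S] gen_ge[of S] by (intro gen_le) auto
  ultimately show "f x \<in> gen_submod R M S" by auto
qed

lemma splus_submod:
  assumes A: "submod R M A" and P: "submod R M P"
  shows "submod R M (splus M A P)"
proof -
  have AP: "A \<subseteq> carrier M" "P \<subseteq> carrier M" using A P submodD by auto
  show ?thesis unfolding submod_def splus_def
  proof (intro conjI ballI)
    show "{a \<oplus>\<^bsub>M\<^esub> p |a p. a \<in> A \<and> p \<in> P} \<subseteq> carrier M" using AP by auto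
    show "\<zero>\<^bsub>M\<^esub> \<in> {a \<oplus>\<^bsub>M\<^esub> p |a p. a \<in> A \<and> p \<in> P}"
      using submodD(2)[OF A] submodD(2)[OF P] by (intro CollectI exI[of _ "\<zero>\<^bsub>M\<^esub>"]) auto
  next
    fix x y assume "x \<in> {a \<oplus>\<^bsub>M\<^esub> p |a p. a \<in> A \<and> p \<in> P}" "y \<in> {a \<oplus>\<^bsub>M\<^esub> p |a p. a \<in> A \<and> p \<in> P}"
    then obtain a p b q where "x = a \<oplus>\<^bsub>M\<^esub> p" "y = b \<oplus>\<^bsub>M\<^esub> q" "a \<in> A" "p \<in> P" "b \<in> A" "q \<in> P" by auto
    moreover have c: "a \<in> carrier M" "p \<in> carrier M" "b \<in> carrier M" "q \<in> carrier M"
      using calculation AP by auto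
    moreover have "(a \<oplus>\<^bsub>M\<^esub> p) \<oplus>\<^bsub>M\<^esub> (b \<oplus>\<^bsub>M\<^esub> q) = (a \<oplus>\<^bsub>M\<^esub> b) \<oplus>\<^bsub>M\<^esub> (p \<oplus>\<^bsub>M\<^esub> q)"
      using c by (simp add: M.a_ac)
    ultimately show "x \<oplus>\<^bsub>M\<^esub> y \<in> {a \<oplus>\<^bsub>M\<^esub> p |a p. a \<in> A \<and> p \<in> P}"
      using submodD(3)[OF A] submodD(3)[OF P] by blast
  next
    fix r x assume r: "r \<in> carrier R" and "x \<in> {a \<oplus>\<^bsub>M\<^esub> p |a p. a \<in> A \<and> p \<in> P}"
    then obtain a p where "x = a \<oplus>\<^bsub>M\<^esub> p" "a \<in> A" "p \<in> P" by auto
    moreover have "r \<odot>\<^bsub>M\<^esub> (a \<oplus>\<^bsub>M\<^esub> p) = r \<odot>\<^bsub>M\<^esub> a \<oplus>\<^bsub>M\<^esub> r \<odot>\<^bsub>M\<^esub> p"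
      using calculation AP r by (auto intro!: smult_rdistr)
    ultimately show "r \<odot>\<^bsub>M\<^esub> x \<in> {a \<oplus>\<^bsub>M\<^esub> p |a p. a \<in> A \<and> p \<in> P}"
      using submodD(4)[OF A] submodD(4)[OF P] r by blast
  qed
qed

lemma splus_fi:
  assumes A: "A \<in> fi_submods R M" and P: "P \<in> fi_submods R M"
  shows "splus M A P \<in> fi_submods R M"
proof (rule fiI[OF splus_submod[OF fiD(1)[OF A] fiD(1)[OF P]]])
  fix f x assume f: "f \<in> lhom R M M" and "x \<in> splus M A P"
  then obtain a p where "x = a \<oplus>\<^bsub>M\<^esub> p" "a \<in> A" "p \<in> P" by (auto simp: splus_def)
  moreover have "a \<in> carrier M" "p \<in> carrier M" using calculation fiD(1)[OF A] fiD(1)[OF P] submodD(1) by auto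
  ultimately have "f x = f a \<oplus>\<^bsub>M\<^esub> f p" "f a \<in> A" "f p \<in> P"
    using homD(2)[OF f] fiD(2)[OF A f] fiD(2)[OF P f] by auto
  then show "f x \<in> splus M A P" unfolding splus_def by blast
qed

lemma splus_ge1: "submod R M P \<Longrightarrow> A \<subseteq> carrier M \<Longrightarrow> A \<subseteq> splus M A P"
proof
  fix a assume "submod R M P" "A \<subseteq> carrier M" "a \<in> A"
  then show "a \<in> splus M A P" unfolding splus_def
    by (intro CollectI exI[of _ a] exI[of _ "\<zero>\<^bsub>M\<^esub>"]) (auto simp: submodD)
qed

lemma splus_ge2: "submod R M A \<Longrightarrow> P \<subseteq> carrier M \<Longrightarrow> P \<subseteq> splus M A P"
proof
  fix p assume "submod R M A" "P \<subseteq> carrier M" "p \<in> P"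
  then show "p \<in> splus M A P" unfolding splus_def
    by (intro CollectI exI[of _ p] exI[of _ "\<zero>\<^bsub>M\<^esub>"]) (auto simp: submodD)
qed

lemma mprod_gens_carrier: "N \<subseteq> carrier M \<Longrightarrow> \<Union>{f ` N | f. f \<in> lhom R M M \<and> f ` carrier M \<subseteq> L} \<subseteq> carrier M"
proof
  fix y assume N: "N \<subseteq> carrier M" and "y \<in> \<Union>{f ` N | f. f \<in> lhom R M M \<and> f ` carrier M \<subseteq> L}"
  then obtain f n where "f \<in> lhom R M M" "n \<in> N" "y = f n" by auto
  then show "y \<in> carrier M" using homD(1) N by auto
qed

lemma mprod_ge: "f \<in> lhom R M M \<Longrightarrow> f ` carrier M \<subseteq> L \<Longrightarrow> n \<in> N \<Longrightarrow> f n \<in> mprod R M N L"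
proof -
  assume "f \<in> lhom R M M" "f ` carrier M \<subseteq> L" "n \<in> N"
  then have "f n \<in> \<Union>{f ` N | f. f \<in> lhom R M M \<and> f ` carrier M \<subseteq> L}" by blast
  then show ?thesis unfolding mprod_def by (rule subsetD[OF gen_ge])
qed

lemma mprod_le: "submod R M Q \<Longrightarrow> (\<And>f. f \<in> lhom R M M \<Longrightarrow> f ` carrier M \<subseteq> L \<Longrightarrow> f ` N \<subseteq> Q) \<Longrightarrow> mprod R M N L \<subseteq> Q"
  unfolding mprod_def by (rule gen_le) blast+

lemma mprod_sub: "N \<subseteq> carrier M \<Longrightarrow> submod R M L \<Longrightarrow> mprod R M N L \<subseteq> L"
  by (rule mprod_le) (auto dest: subsetD)

lemma mprod_fi:
  assumes N: "N \<subseteq> carrier M" and L: "L \<in> fi_submods R M"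
  shows "mprod R M N L \<in> fi_submods R M"
  unfolding mprod_def
proof (rule gen_fi[OF mprod_gens_carrier[OF N]])
  fix g x assume g: "g \<in> lhom R M M" and "x \<in> \<Union>{f ` N |f. f \<in> lhom R M M \<and> f ` carrier M \<subseteq> L}"
  then obtain f n where f: "f \<in> lhom R M M" "f ` carrier M \<subseteq> L" and n: "n \<in> N" and x: "x = f n" by auto
  have "(\<lambda>x. g (f x)) \<in> lhom R M M" by (rule hom_comp[OF f(1) g])
  moreover have "(\<lambda>x. g (f x)) ` carrier M \<subseteq> L" using f(2) fiD(2)[OF L g] by auto
  ultimately show "g x \<in> \<Union>{f ` N |f. f \<in> lhom R M M \<and> f ` carrier M \<subseteq> L}"
    using x n by blast
qed

lemma figen_fi: "x \<in> carrier M \<Longrightarrow> figen R M x \<in> fi_submods R M"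
  unfolding figen_def
proof (rule gen_fi)
  show "{f x |f. f \<in> lhom R M M} \<subseteq> carrier M" if "x \<in> carrier M"
    using that homD(1) by auto
  fix g y assume g: "g \<in> lhom R M M" and "y \<in> {f x |f. f \<in> lhom R M M}"
  then obtain f where f: "f \<in> lhom R M M" "y = f x" by auto
  have "(\<lambda>z. g (f z)) \<in> lhom R M M" by (rule hom_comp[OF f(1) g])
  then show "g y \<in> {f x |f. f \<in> lhom R M M}" using f(2) by auto
qed

lemma figen_mem: "x \<in> figen R M x"
proof -
  have "x \<in> {f x |f. f \<in> lhom R M M}" using hom_id by (intro CollectI exI[of _ "\<lambda>x. x"]) simp
  then show ?thesis unfolding figen_def by (rule subsetD[OF gen_ge])
qed

lemma figen_le: "Q \<in> fi_submods R M \<Longrightarrow> x \<in> Q \<Longrightarrow> figen R M x \<subseteq> Q"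
proof -
  assume Q: "Q \<in> fi_submods R M" and x: "x \<in> Q"
  show ?thesis unfolding figen_def
  proof (rule gen_le[OF fiD(1)[OF Q]])
    show "{f x |f. f \<in> lhom R M M} \<subseteq> Q" using fiD(2)[OF Q _ x] by blast
  qed
qed

end



definition qrp :: "('r,'a) module \<Rightarrow> 'a set \<Rightarrow> 'a \<Rightarrow> 'a" where
  "qrp M P y = (SOME z. z \<in> carrier M \<and> y \<ominus>\<^bsub>M\<^esub> z \<in> P)"

definition qcl :: "('r,'a) module \<Rightarrow> 'a set \<Rightarrow> 'a \<Rightarrow> ('r \<times> 'a) list" where
  "qcl M P y = [(undefined, qrp M P y)]"

definition qvl :: "('r \<times> 'a) list \<Rightarrow> 'a" where
  "qvl x = snd (hd x)"

definition qmod :: "('r,'a) module \<Rightarrow> 'a set \<Rightarrow> 'a set \<Rightarrow> ('r, ('r \<times> 'a) list) module" where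
  "qmod M S P = \<lparr>carrier = qcl M P ` S, mult = (\<lambda>x y. x), one = qcl M P \<zero>\<^bsub>M\<^esub>,
     zero = qcl M P \<zero>\<^bsub>M\<^esub>, add = (\<lambda>x y. qcl M P (qvl x \<oplus>\<^bsub>M\<^esub> qvl y)),
     smult = (\<lambda>a x. qcl M P (a \<odot>\<^bsub>M\<^esub> qvl x))\<rparr>"

lemma qmod_simps:
  "carrier (qmod M S P) = qcl M P ` S"
  "zero (qmod M S P) = qcl M P \<zero>\<^bsub>M\<^esub>"
  "add (qmod M S P) x y = qcl M P (qvl x \<oplus>\<^bsub>M\<^esub> qvl y)"
  "smult (qmod M S P) a x = qcl M P (a \<odot>\<^bsub>M\<^esub> qvl x)"
  by (simp_all add: qmod_def)

lemma qvl_qcl[simp]: "qvl (qcl M P y) = qrp M P y"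
  by (simp add: qvl_def qcl_def)

context lmod begin

lemma minus_self: "y \<in> carrier M \<Longrightarrow> y \<ominus>\<^bsub>M\<^esub> y = \<zero>\<^bsub>M\<^esub>"
  by (simp add: M.minus_eq M.r_neg)

lemma minus_zero_eq: "y \<in> carrier M \<Longrightarrow> z \<in> carrier M \<Longrightarrow> y \<ominus>\<^bsub>M\<^esub> z = \<zero>\<^bsub>M\<^esub> \<Longrightarrow> y = z"
proof -
  assume y: "y \<in> carrier M" and z: "z \<in> carrier M" and e: "y \<ominus>\<^bsub>M\<^esub> z = \<zero>\<^bsub>M\<^esub>"
  have "y \<oplus>\<^bsub>M\<^esub> \<ominus>\<^bsub>M\<^esub> z = \<zero>\<^bsub>M\<^esub>" using e by (simp add: M.minus_eq)
  from M.minus_equality[OF this] have "\<ominus>\<^bsub>M\<^esub> (\<ominus>\<^bsub>M\<^esub> z) = y" using y z by simp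
  then show ?thesis using z by (simp add: M.minus_minus)
qed

lemma minus_swap: "y \<in> carrier M \<Longrightarrow> z \<in> carrier M \<Longrightarrow> \<ominus>\<^bsub>M\<^esub> (y \<ominus>\<^bsub>M\<^esub> z) = z \<ominus>\<^bsub>M\<^esub> y"
  by (simp add: M.minus_eq M.minus_add M.minus_minus M.a_comm)

lemma minus_trans: "x \<in> carrier M \<Longrightarrow> y \<in> carrier M \<Longrightarrow> z \<in> carrier M \<Longrightarrow>
   (x \<ominus>\<^bsub>M\<^esub> y) \<oplus>\<^bsub>M\<^esub> (y \<ominus>\<^bsub>M\<^esub> z) = x \<ominus>\<^bsub>M\<^esub> z"
proof -
  assume c: "x \<in> carrier M" "y \<in> carrier M" "z \<in> carrier M"
  have "(x \<oplus>\<^bsub>M\<^esub> \<ominus>\<^bsub>M\<^esub> y) \<oplus>\<^bsub>M\<^esub> (y \<oplus>\<^bsub>M\<^esub> \<ominus>\<^bsub>M\<^esub> z)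
     = x \<oplus>\<^bsub>M\<^esub> ((\<ominus>\<^bsub>M\<^esub> y \<oplus>\<^bsub>M\<^esub> y) \<oplus>\<^bsub>M\<^esub> \<ominus>\<^bsub>M\<^esub> z)"
    using c by (simp add: M.a_assoc)
  also have "\<dots> = x \<oplus>\<^bsub>M\<^esub> \<ominus>\<^bsub>M\<^esub> z" using c by (simp add: M.l_neg)
  finally show ?thesis by (simp add: M.minus_eq)
qed

lemma minus_addadd: "y \<in> carrier M \<Longrightarrow> z \<in> carrier M \<Longrightarrow> u \<in> carrier M \<Longrightarrow> v \<in> carrier M \<Longrightarrow>
   (y \<oplus>\<^bsub>M\<^esub> z) \<ominus>\<^bsub>M\<^esub> (u \<oplus>\<^bsub>M\<^esub> v) = (y \<ominus>\<^bsub>M\<^esub> u) \<oplus>\<^bsub>M\<^esub> (z \<ominus>\<^bsub>M\<^esub> v)"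
  by (simp add: M.minus_eq M.minus_add M.a_ac)

lemma addminus_cancel: "b \<in> carrier M \<Longrightarrow> p \<in> carrier M \<Longrightarrow> (b \<oplus>\<^bsub>M\<^esub> p) \<ominus>\<^bsub>M\<^esub> b = p"
proof -
  assume c: "b \<in> carrier M" "p \<in> carrier M"
  have "(b \<oplus>\<^bsub>M\<^esub> p) \<oplus>\<^bsub>M\<^esub> \<ominus>\<^bsub>M\<^esub> b = (b \<oplus>\<^bsub>M\<^esub> \<ominus>\<^bsub>M\<^esub> b) \<oplus>\<^bsub>M\<^esub> p"
    using c by (simp add: M.a_ac)
  then show ?thesis using c by (simp add: M.minus_eq M.r_neg)
qed

lemma minus_plus_back: "x \<in> carrier M \<Longrightarrow> y \<in> carrier M \<Longrightarrow> (x \<ominus>\<^bsub>M\<^esub> y) \<oplus>\<^bsub>M\<^esub> y = x"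
proof -
  assume c: "x \<in> carrier M" "y \<in> carrier M"
  have "(x \<oplus>\<^bsub>M\<^esub> \<ominus>\<^bsub>M\<^esub> y) \<oplus>\<^bsub>M\<^esub> y = x \<oplus>\<^bsub>M\<^esub> (\<ominus>\<^bsub>M\<^esub> y \<oplus>\<^bsub>M\<^esub> y)"
    using c by (simp add: M.a_assoc)
  then show ?thesis using c by (simp add: M.minus_eq M.l_neg)
qed

context
  fixes P assumes P: "submod R M P"
begin

lemma Pc: "P \<subseteq> carrier M" using submodD(1)[OF P] .

lemma rel_sym: "y \<in> carrier M \<Longrightarrow> z \<in> carrier M \<Longrightarrow> y \<ominus>\<^bsub>M\<^esub> z \<in> P \<Longrightarrow> z \<ominus>\<^bsub>M\<^esub> y \<in> P"
  using submod_neg[OF P, of "y \<ominus>\<^bsub>M\<^esub> z"] minus_swap by simp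

lemma rel_trans: "x \<in> carrier M \<Longrightarrow> y \<in> carrier M \<Longrightarrow> z \<in> carrier M \<Longrightarrow>
   x \<ominus>\<^bsub>M\<^esub> y \<in> P \<Longrightarrow> y \<ominus>\<^bsub>M\<^esub> z \<in> P \<Longrightarrow> x \<ominus>\<^bsub>M\<^esub> z \<in> P"
  using submodD(3)[OF P, of "x \<ominus>\<^bsub>M\<^esub> y" "y \<ominus>\<^bsub>M\<^esub> z"] minus_trans by simp

lemma qrp_prop: "y \<in> carrier M \<Longrightarrow> qrp M P y \<in> carrier M \<and> y \<ominus>\<^bsub>M\<^esub> qrp M P y \<in> P"
  unfolding qrp_def
  by (rule someI[of _ y]) (simp add: minus_self submodD(2)[OF P])

lemma qrp_eq: "y \<in> carrier M \<Longrightarrow> z \<in> carrier M \<Longrightarrow> y \<ominus>\<^bsub>M\<^esub> z \<in> P \<Longrightarrow> qrp M P y = qrp M P z"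
proof -
  assume y: "y \<in> carrier M" and z: "z \<in> carrier M" and r: "y \<ominus>\<^bsub>M\<^esub> z \<in> P"
  have "(\<lambda>w. w \<in> carrier M \<and> y \<ominus>\<^bsub>M\<^esub> w \<in> P) = (\<lambda>w. w \<in> carrier M \<and> z \<ominus>\<^bsub>M\<^esub> w \<in> P)"
  proof (rule ext, rule iffI)
    fix w assume "w \<in> carrier M \<and> y \<ominus>\<^bsub>M\<^esub> w \<in> P"
    then show "w \<in> carrier M \<and> z \<ominus>\<^bsub>M\<^esub> w \<in> P"
      using rel_trans[OF z y, of w] rel_sym[OF y z r] by blast
  next
    fix w assume "w \<in> carrier M \<and> z \<ominus>\<^bsub>M\<^esub> w \<in> P"
    then show "w \<in> carrier M \<and> y \<ominus>\<^bsub>M\<^esub> w \<in> P"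
      using rel_trans[OF y z, of w] r by blast
  qed
  then show ?thesis unfolding qrp_def by simp
qed

lemma qcl_eq_iff: "y \<in> carrier M \<Longrightarrow> z \<in> carrier M \<Longrightarrow> qcl M P y = qcl M P z \<longleftrightarrow> y \<ominus>\<^bsub>M\<^esub> z \<in> P"
proof
  assume y: "y \<in> carrier M" and z: "z \<in> carrier M" and e: "qcl M P y = qcl M P z"
  then have e': "qrp M P y = qrp M P z" by (simp add: qcl_def)
  have "y \<ominus>\<^bsub>M\<^esub> qrp M P y \<in> P" "z \<ominus>\<^bsub>M\<^esub> qrp M P z \<in> P" "qrp M P z \<in> carrier M"
    using qrp_prop[OF y] qrp_prop[OF z] by auto
  then show "y \<ominus>\<^bsub>M\<^esub> z \<in> P" using e' rel_trans[OF y _ z] rel_sym[OF z] by auto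
next
  assume "y \<in> carrier M" "z \<in> carrier M" "y \<ominus>\<^bsub>M\<^esub> z \<in> P"
  then show "qcl M P y = qcl M P z" using qrp_eq by (simp add: qcl_def)
qed

lemma qcl_qrp: "y \<in> carrier M \<Longrightarrow> qcl M P (qrp M P y) = qcl M P y"
  using qrp_prop[of y] qcl_eq_iff rel_sym by auto

lemma q_add: "y \<in> carrier M \<Longrightarrow> z \<in> carrier M \<Longrightarrow>
   add (qmod M S P) (qcl M P y) (qcl M P z) = qcl M P (y \<oplus>\<^bsub>M\<^esub> z)"
proof -
  assume y: "y \<in> carrier M" and z: "z \<in> carrier M"
  have a: "qrp M P y \<in> carrier M" "y \<ominus>\<^bsub>M\<^esub> qrp M P y \<in> P" using qrp_prop[OF y] by auto
  have b: "qrp M P z \<in> carrier M" "z \<ominus>\<^bsub>M\<^esub> qrp M P z \<in> P" using qrp_prop[OF z] by auto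
  have "(y \<oplus>\<^bsub>M\<^esub> z) \<ominus>\<^bsub>M\<^esub> (qrp M P y \<oplus>\<^bsub>M\<^esub> qrp M P z) \<in> P"
    using minus_addadd[OF y z a(1) b(1)] submodD(3)[OF P a(2) b(2)] by simp
  then have "qcl M P (qrp M P y \<oplus>\<^bsub>M\<^esub> qrp M P z) = qcl M P (y \<oplus>\<^bsub>M\<^esub> z)"
    using qcl_eq_iff[of "y \<oplus>\<^bsub>M\<^esub> z" "qrp M P y \<oplus>\<^bsub>M\<^esub> qrp M P z"] y z a b by simp
  then show ?thesis by (simp add: qmod_simps)
qed

lemma q_smult: "a \<in> carrier R \<Longrightarrow> y \<in> carrier M \<Longrightarrow>
   smult (qmod M S P) a (qcl M P y) = qcl M P (a \<odot>\<^bsub>M\<^esub> y)"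
proof -
  assume r: "a \<in> carrier R" and y: "y \<in> carrier M"
  have c: "qrp M P y \<in> carrier M" "y \<ominus>\<^bsub>M\<^esub> qrp M P y \<in> P" using qrp_prop[OF y] by auto
  have "a \<odot>\<^bsub>M\<^esub> y \<ominus>\<^bsub>M\<^esub> a \<odot>\<^bsub>M\<^esub> qrp M P y \<in> P"
    using smult_minus[OF r y c(1)] submodD(4)[OF P r c(2)] by simp
  then have "qcl M P (a \<odot>\<^bsub>M\<^esub> qrp M P y) = qcl M P (a \<odot>\<^bsub>M\<^esub> y)"
    using qcl_eq_iff[of "a \<odot>\<^bsub>M\<^esub> y" "a \<odot>\<^bsub>M\<^esub> qrp M P y"] r y c by simp
  then show ?thesis by (simp add: qmod_simps)
qed

end

end



context lmod begin

context
  fixes P S assumes P: "submod R M P" and S: "submod R M S"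
begin

lemma Sc: "y \<in> S \<Longrightarrow> y \<in> carrier M" using submodD(1)[OF S] by auto

lemma qmod_ag: "abelian_group (qmod M S P)"
proof (rule abelian_groupI)
  fix x y assume "x \<in> carrier (qmod M S P)" "y \<in> carrier (qmod M S P)"
  then obtain a b where "x = qcl M P a" "y = qcl M P b" "a \<in> S" "b \<in> S" by (auto simp: qmod_simps)
  then show "x \<oplus>\<^bsub>qmod M S P\<^esub> y \<in> carrier (qmod M S P)"
    using q_add[OF P Sc Sc] submodD(3)[OF S] by (auto simp: qmod_simps)
next
  show "\<zero>\<^bsub>qmod M S P\<^esub> \<in> carrier (qmod M S P)" using submodD(2)[OF S] by (auto simp: qmod_simps)
next
  fix x y z assume "x \<in> carrier (qmod M S P)" "y \<in> carrier (qmod M S P)" "z \<in> carrier (qmod M S P)"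
  then obtain a b c where "x = qcl M P a" "y = qcl M P b" "z = qcl M P c" "a \<in> S" "b \<in> S" "c \<in> S"
    by (auto simp: qmod_simps)
  then show "x \<oplus>\<^bsub>qmod M S P\<^esub> y \<oplus>\<^bsub>qmod M S P\<^esub> z = x \<oplus>\<^bsub>qmod M S P\<^esub> (y \<oplus>\<^bsub>qmod M S P\<^esub> z)"
    using q_add[OF P] Sc by (simp add: M.a_assoc)
next
  fix x y assume "x \<in> carrier (qmod M S P)" "y \<in> carrier (qmod M S P)"
  then obtain a b where "x = qcl M P a" "y = qcl M P b" "a \<in> S" "b \<in> S" by (auto simp: qmod_simps)
  then show "x \<oplus>\<^bsub>qmod M S P\<^esub> y = y \<oplus>\<^bsub>qmod M S P\<^esub> x"
    using q_add[OF P] Sc by (simp add: M.a_comm)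
next
  fix x assume "x \<in> carrier (qmod M S P)"
  then obtain a where "x = qcl M P a" "a \<in> S" by (auto simp: qmod_simps)
  then show "\<zero>\<^bsub>qmod M S P\<^esub> \<oplus>\<^bsub>qmod M S P\<^esub> x = x"
    using q_add[OF P, of "\<zero>\<^bsub>M\<^esub>" a S] Sc by (simp add: qmod_simps)
next
  fix x assume "x \<in> carrier (qmod M S P)"
  then obtain a where a: "x = qcl M P a" "a \<in> S" by (auto simp: qmod_simps)
  have "qcl M P (\<ominus>\<^bsub>M\<^esub> a) \<in> carrier (qmod M S P)" using submod_neg[OF S a(2)] by (simp add: qmod_simps)
  moreover have "qcl M P (\<ominus>\<^bsub>M\<^esub> a) \<oplus>\<^bsub>qmod M S P\<^esub> x = \<zero>\<^bsub>qmod M S P\<^esub>"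
    using a q_add[OF P, of "\<ominus>\<^bsub>M\<^esub> a" a S] Sc[OF a(2)] by (simp add: qmod_simps M.l_neg)
  ultimately show "\<exists>y\<in>carrier (qmod M S P). y \<oplus>\<^bsub>qmod M S P\<^esub> x = \<zero>\<^bsub>qmod M S P\<^esub>" by blast
qed

lemma qmod_lmodule: "lmodule R (qmod M S P)"
  unfolding lmodule_def
proof (intro conjI ballI R_ring qmod_ag)
  fix a x assume a: "a \<in> carrier R" and "x \<in> carrier (qmod M S P)"
  then obtain y where y: "x = qcl M P y" "y \<in> S" by (auto simp: qmod_simps)
  show "a \<odot>\<^bsub>qmod M S P\<^esub> x \<in> carrier (qmod M S P)"
    using y a q_smult[OF P a Sc[OF y(2)]] submodD(4)[OF S a y(2)] by (simp add: qmod_simps)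
next
  fix a b x assume a: "a \<in> carrier R" and b: "b \<in> carrier R" and "x \<in> carrier (qmod M S P)"
  then obtain y where y: "x = qcl M P y" "y \<in> S" by (auto simp: qmod_simps)
  note yc = Sc[OF y(2)]
  show "(a \<oplus>\<^bsub>R\<^esub> b) \<odot>\<^bsub>qmod M S P\<^esub> x = a \<odot>\<^bsub>qmod M S P\<^esub> x \<oplus>\<^bsub>qmod M S P\<^esub> b \<odot>\<^bsub>qmod M S P\<^esub> x"
    using y a b yc q_smult[OF P] q_add[OF P] by (simp add: smult_ldistr)
  show "(a \<otimes>\<^bsub>R\<^esub> b) \<odot>\<^bsub>qmod M S P\<^esub> x = a \<odot>\<^bsub>qmod M S P\<^esub> (b \<odot>\<^bsub>qmod M S P\<^esub> x)"
    using y a b yc q_smult[OF P] by (simp add: smult_assoc)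
next
  fix a x z assume a: "a \<in> carrier R" and "x \<in> carrier (qmod M S P)" "z \<in> carrier (qmod M S P)"
  then obtain y w where y: "x = qcl M P y" "y \<in> S" "z = qcl M P w" "w \<in> S" by (auto simp: qmod_simps)
  note yc = Sc[OF y(2)] Sc[OF y(4)]
  show "a \<odot>\<^bsub>qmod M S P\<^esub> (x \<oplus>\<^bsub>qmod M S P\<^esub> z) = a \<odot>\<^bsub>qmod M S P\<^esub> x \<oplus>\<^bsub>qmod M S P\<^esub> a \<odot>\<^bsub>qmod M S P\<^esub> z"
    using y a yc q_smult[OF P] q_add[OF P] by (simp add: smult_rdistr)
next
  fix x assume "x \<in> carrier (qmod M S P)"
  then obtain y where y: "x = qcl M P y" "y \<in> S" by (auto simp: qmod_simps)
  show "\<one>\<^bsub>R\<^esub> \<odot>\<^bsub>qmod M S P\<^esub> x = x"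
    using y Sc[OF y(2)] q_smult[OF P] by simp
qed

lemma qmod_sigma: "in_sigma R M (qmod M S P)"
proof -
  define U where "U = {f :: ('r \<times> 'a) list \<Rightarrow> 'a. (\<forall>i. i \<noteq> [] \<longrightarrow> f i = \<zero>\<^bsub>M\<^esub>) \<and> f [] \<in> S}"
  define h where "h = (\<lambda>f :: ('r \<times> 'a) list \<Rightarrow> 'a. qcl M P (f []))"
  have fin: "finite {i. f i \<noteq> \<zero>\<^bsub>M\<^esub>}" if "f \<in> U" for f
    by (rule finite_subset[of _ "{[]}"]) (use that in \<open>auto simp: U_def\<close>)
  have Ucar: "f i \<in> carrier M" if "f \<in> U" for f i
    using that Sc by (cases "i = []") (auto simp: U_def)
  have sub: "submod R (dsum M :: ('r, ('r \<times> 'a) list \<Rightarrow> 'a) module) U"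
    unfolding submod_def
  proof (intro conjI ballI)
    show "U \<subseteq> carrier (dsum M)" using fin Ucar by (auto simp: dsum_def)
    show "\<zero>\<^bsub>dsum M\<^esub> \<in> U" using submodD(2)[OF S] by (simp add: dsum_def U_def)
  next
    fix f g assume f: "f \<in> U" and g: "g \<in> U"
    show "f \<oplus>\<^bsub>dsum M\<^esub> g \<in> U"
      using f g submodD(3)[OF S] by (simp add: dsum_def U_def)
  next
    fix a f assume a: "a \<in> carrier R" and f: "f \<in> U"
    show "a \<odot>\<^bsub>dsum M\<^esub> f \<in> U"
      using f a submodD(4)[OF S] by (simp add: dsum_def U_def)
  qed
  have hom: "h \<in> lhom_on R (dsum M :: ('r, ('r \<times> 'a) list \<Rightarrow> 'a) module) U (qmod M S P)"
    unfolding lhom_on_def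
  proof (intro CollectI conjI ballI)
    fix f assume "f \<in> U" then show "h f \<in> carrier (qmod M S P)" by (simp add: U_def h_def qmod_simps)
  next
    fix f g assume f: "f \<in> U" and g: "g \<in> U"
    show "h (f \<oplus>\<^bsub>dsum M\<^esub> g) = h f \<oplus>\<^bsub>qmod M S P\<^esub> h g"
      using q_add[OF P Ucar[OF f] Ucar[OF g]] by (simp add: h_def dsum_def)
  next
    fix a f assume a: "a \<in> carrier R" and f: "f \<in> U"
    show "h (a \<odot>\<^bsub>dsum M\<^esub> f) = a \<odot>\<^bsub>qmod M S P\<^esub> h f"
      using q_smult[OF P a Ucar[OF f]] by (simp add: h_def dsum_def)
  qed
  have "h ` U = carrier (qmod M S P)"
  proof
    show "h ` U \<subseteq> carrier (qmod M S P)" by (auto simp: U_def h_def qmod_simps)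
    show "carrier (qmod M S P) \<subseteq> h ` U"
    proof
      fix x assume "x \<in> carrier (qmod M S P)"
      then obtain y where y: "x = qcl M P y" "y \<in> S" by (auto simp: qmod_simps)
      let ?f = "\<lambda>i :: ('r \<times> 'a) list. if i = [] then y else \<zero>\<^bsub>M\<^esub>"
      have "?f \<in> U" using y by (simp add: U_def)
      moreover have "h ?f = x" using y by (simp add: h_def)
      ultimately show "x \<in> h ` U" by blast
    qed
  qed
  then show ?thesis unfolding in_sigma_def using qmod_lmodule sub hom by blast
qed

end

end



context lmod begin

lemma qrp_zero: "y \<in> carrier M \<Longrightarrow> qrp M {\<zero>\<^bsub>M\<^esub>} y = y"
  using qrp_prop[OF submod_zero, of y] minus_zero_eq[of y "qrp M {\<zero>\<^bsub>M\<^esub>} y"] by auto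

lemma lift:
  assumes proj: "proj_sigma R M" and B: "submod R M B" and P: "submod R M P"
    and f: "f \<in> lhom R M M" and fim: "f ` carrier M \<subseteq> splus M B P"
  shows "\<exists>g\<in>lhom R M M. g ` carrier M \<subseteq> B \<and> (\<forall>m\<in>carrier M. f m \<ominus>\<^bsub>M\<^esub> g m \<in> P)"
proof -
  note Z = submod_zero
  let ?A = "qmod M B {\<zero>\<^bsub>M\<^esub>}"
  let ?Q = "qmod M B P"
  define g' where "g' = (\<lambda>x :: ('r \<times> 'a) list. qcl M P (qvl x))"
  define f' where "f' = (\<lambda>m. qcl M P (f m))"
  have Bc: "b \<in> B \<Longrightarrow> b \<in> carrier M" for b using submodD(1)[OF B] by auto
  have vA: "qvl (qcl M {\<zero>\<^bsub>M\<^esub>} b) = b" if "b \<in> B" for b using qrp_zero Bc that by simp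
  have sA: "in_sigma R M ?A" by (rule qmod_sigma[OF Z B])
  have sQ: "in_sigma R M ?Q" by (rule qmod_sigma[OF P B])
  have g'hom: "g' \<in> lhom R ?A ?Q"
    unfolding lhom_on_def
  proof (intro CollectI conjI ballI)
    fix x assume "x \<in> carrier ?A"
    then obtain b where "x = qcl M {\<zero>\<^bsub>M\<^esub>} b" "b \<in> B" by (auto simp: qmod_simps)
    then show "g' x \<in> carrier ?Q" using vA by (simp add: g'_def qmod_simps)
  next
    fix x y assume "x \<in> carrier ?A" "y \<in> carrier ?A"
    then obtain b c where bc: "x = qcl M {\<zero>\<^bsub>M\<^esub>} b" "b \<in> B" "y = qcl M {\<zero>\<^bsub>M\<^esub>} c" "c \<in> B"
      by (auto simp: qmod_simps)
    have "x \<oplus>\<^bsub>?A\<^esub> y = qcl M {\<zero>\<^bsub>M\<^esub>} (b \<oplus>\<^bsub>M\<^esub> c)"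
      using bc q_add[OF Z Bc Bc] by simp
    then show "g' (x \<oplus>\<^bsub>?A\<^esub> y) = g' x \<oplus>\<^bsub>?Q\<^esub> g' y"
      using bc vA submodD(3)[OF B] q_add[OF P Bc Bc] by (simp add: g'_def)
  next
    fix a x assume a: "a \<in> carrier R" and "x \<in> carrier ?A"
    then obtain b where b: "x = qcl M {\<zero>\<^bsub>M\<^esub>} b" "b \<in> B" by (auto simp: qmod_simps)
    have "a \<odot>\<^bsub>?A\<^esub> x = qcl M {\<zero>\<^bsub>M\<^esub>} (a \<odot>\<^bsub>M\<^esub> b)"
      using b q_smult[OF Z a Bc] by simp
    then show "g' (a \<odot>\<^bsub>?A\<^esub> x) = a \<odot>\<^bsub>?Q\<^esub> g' x"
      using b a vA submodD(4)[OF B] q_smult[OF P a Bc] by (simp add: g'_def)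
  qed
  have g'surj: "g' ` carrier ?A = carrier ?Q"
  proof -
    have "g' ` carrier ?A = (\<lambda>b. g' (qcl M {\<zero>\<^bsub>M\<^esub>} b)) ` B" by (simp add: qmod_simps image_image)
    also have "\<dots> = qcl M P ` B" using vA by (auto simp: g'_def)
    finally show ?thesis by (simp add: qmod_simps)
  qed
  have f'hom: "f' \<in> lhom R M ?Q"
    unfolding lhom_on_def
  proof (intro CollectI conjI ballI)
    fix m assume m: "m \<in> carrier M"
    then have "f m \<in> splus M B P" using fim by auto
    then obtain b p where bp: "f m = b \<oplus>\<^bsub>M\<^esub> p" "b \<in> B" "p \<in> P" by (auto simp: splus_def)
    have pc: "p \<in> carrier M" using submodD(1)[OF P] bp by auto
    have "qcl M P (f m) = qcl M P b"
      using qcl_eq_iff[OF P, of "f m" b] bp Bc pc addminus_cancel by simp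
    then show "f' m \<in> carrier ?Q" using bp by (simp add: f'_def qmod_simps)
  next
    fix m n assume "m \<in> carrier M" "n \<in> carrier M"
    then show "f' (m \<oplus>\<^bsub>M\<^esub> n) = f' m \<oplus>\<^bsub>?Q\<^esub> f' n"
      using homD[OF f] q_add[OF P] by (simp add: f'_def)
  next
    fix a m assume "a \<in> carrier R" "m \<in> carrier M"
    then show "f' (a \<odot>\<^bsub>M\<^esub> m) = a \<odot>\<^bsub>?Q\<^esub> f' m"
      using homD[OF f] q_smult[OF P] by (simp add: f'_def)
  qed
  from proj[unfolded proj_sigma_def, rule_format, OF sA sQ g'hom g'surj f'hom]
  obtain h where h: "h \<in> lhom R M ?A" and hg: "\<And>x. x \<in> carrier M \<Longrightarrow> g' (h x) = f' x" by blast
  define g where "g = (\<lambda>m. qvl (h m))"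
  have hB: "g m \<in> B \<and> h m = qcl M {\<zero>\<^bsub>M\<^esub>} (g m)" if m: "m \<in> carrier M" for m
  proof -
    have "h m \<in> carrier ?A" using h m by (auto simp: lhom_on_def)
    then obtain b where "h m = qcl M {\<zero>\<^bsub>M\<^esub>} b" "b \<in> B" by (auto simp: qmod_simps)
    then show ?thesis using vA by (simp add: g_def)
  qed
  have ghom: "g \<in> lhom R M M"
    unfolding lhom_on_def
  proof (intro CollectI conjI ballI)
    fix m assume "m \<in> carrier M" then show "g m \<in> carrier M" using hB Bc by blast
  next
    fix m n assume m: "m \<in> carrier M" and n: "n \<in> carrier M"
    have "h (m \<oplus>\<^bsub>M\<^esub> n) = h m \<oplus>\<^bsub>?A\<^esub> h n" using h m n by (auto simp: lhom_on_def)
    also have "\<dots> = qcl M {\<zero>\<^bsub>M\<^esub>} (g m \<oplus>\<^bsub>M\<^esub> g n)"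
      using hB[OF m] hB[OF n] Bc by (simp add: q_add[OF Z])
    finally have "g (m \<oplus>\<^bsub>M\<^esub> n) = qvl (qcl M {\<zero>\<^bsub>M\<^esub>} (g m \<oplus>\<^bsub>M\<^esub> g n))"
      by (simp add: g_def)
    then show "g (m \<oplus>\<^bsub>M\<^esub> n) = g m \<oplus>\<^bsub>M\<^esub> g n"
      using hB[OF m] hB[OF n] vA[of "g m \<oplus>\<^bsub>M\<^esub> g n"] submodD(3)[OF B] by simp
  next
    fix a m assume a: "a \<in> carrier R" and m: "m \<in> carrier M"
    have "h (a \<odot>\<^bsub>M\<^esub> m) = a \<odot>\<^bsub>?A\<^esub> h m" using h a m by (auto simp: lhom_on_def)
    also have "\<dots> = qcl M {\<zero>\<^bsub>M\<^esub>} (a \<odot>\<^bsub>M\<^esub> g m)"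
      using hB[OF m] Bc a by (simp add: q_smult[OF Z])
    finally have "g (a \<odot>\<^bsub>M\<^esub> m) = qvl (qcl M {\<zero>\<^bsub>M\<^esub>} (a \<odot>\<^bsub>M\<^esub> g m))"
      by (simp add: g_def)
    then show "g (a \<odot>\<^bsub>M\<^esub> m) = a \<odot>\<^bsub>M\<^esub> g m"
      using hB[OF m] vA[of "a \<odot>\<^bsub>M\<^esub> g m"] submodD(4)[OF B a] by simp
  qed
  have "f m \<ominus>\<^bsub>M\<^esub> g m \<in> P" if m: "m \<in> carrier M" for m
  proof -
    have "qcl M P (g m) = qcl M P (f m)" using hg[OF m] by (simp add: g'_def f'_def g_def)
    moreover have gc: "g m \<in> carrier M" using hB[OF m] Bc by blast
    ultimately have "g m \<ominus>\<^bsub>M\<^esub> f m \<in> P"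
      using qcl_eq_iff[OF P gc homD(1)[OF f m]] by simp
    then show ?thesis using rel_sym[OF P gc homD(1)[OF f m]] by simp
  qed
  moreover have "g ` carrier M \<subseteq> B" using hB by auto
  ultimately show ?thesis using ghom by blast
qed

end



context lmod begin

lemma prime_exists:
  assumes proj: "proj_sigma R M" and sp: "semiprime_in R M N"
    and x: "x \<in> carrier M" and xN: "x \<notin> N"
  shows "\<exists>P\<in>LgSpec R M. N \<subseteq> P \<and> x \<notin> P"
proof -
  have Nfi: "N \<in> fi_submods R M" and Nne: "N \<noteq> carrier M"
    and Nsp: "\<And>K. K \<in> fi_submods R M \<Longrightarrow> mprod R M K K \<subseteq> N \<Longrightarrow> K \<subseteq> N"
    using sp by (auto simp: semiprime_in_def)
  define nxt where "nxt y = (SOME z. z \<in> mprod R M (figen R M y) (figen R M y) \<and> z \<notin> N)" for y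
  define xs where "xs = rec_nat x (\<lambda>_ y. nxt y)"
  have xs0: "xs 0 = x" by (simp add: xs_def)
  have xsS: "xs (Suc i) = nxt (xs i)" for i by (simp add: xs_def)
  have Kc: "figen R M y \<subseteq> carrier M" if "y \<in> carrier M" for y
    using submodD(1)[OF fiD(1)[OF figen_fi[OF that]]] .
  have step: "nxt y \<in> mprod R M (figen R M y) (figen R M y) \<and> nxt y \<notin> N"
    if y: "y \<in> carrier M" "y \<notin> N" for y
  proof -
    have "\<not> figen R M y \<subseteq> N" using figen_mem[of y] y by blast
    then have "\<not> mprod R M (figen R M y) (figen R M y) \<subseteq> N" using Nsp figen_fi[OF y(1)] by blast
    then have "\<exists>z. z \<in> mprod R M (figen R M y) (figen R M y) \<and> z \<notin> N" by blast
    then show ?thesis unfolding nxt_def by (rule someI_ex)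
  qed
  have mpK: "mprod R M (figen R M y) (figen R M y) \<subseteq> figen R M y" if "y \<in> carrier M" for y
    using mprod_sub[OF Kc[OF that] fiD(1)[OF figen_fi[OF that]]] .
  have inv: "xs i \<in> carrier M \<and> xs i \<notin> N" for i
  proof (induction i)
    case 0 then show ?case using x xN xs0 by simp
  next
    case (Suc i)
    then show ?case using step[of "xs i"] mpK[of "xs i"] Kc[of "xs i"] xsS[of i] by auto
  qed
  define K where "K i = figen R M (xs i)" for i
  have Kfi: "K i \<in> fi_submods R M" for i using figen_fi inv by (simp add: K_def)
  have dec1: "K (Suc i) \<subseteq> mprod R M (K i) (K i)" for i
  proof -
    have "xs (Suc i) \<in> mprod R M (K i) (K i)" using step[of "xs i"] inv[of i] xsS[of i] by (simp add: K_def)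
    moreover have "mprod R M (K i) (K i) \<in> fi_submods R M"
      using mprod_fi[OF _ Kfi[of i]] Kc[of "xs i"] inv[of i] by (simp add: K_def)
    ultimately show ?thesis unfolding K_def[of "Suc i"] by (rule figen_le[rotated])
  qed
  have dec: "K (i + d) \<subseteq> K i" for i d
  proof (induction d)
    case 0 then show ?case by simp
  next
    case (Suc d)
    have "K (Suc (i + d)) \<subseteq> K (i + d)"
      using dec1[of "i + d"] mpK[of "xs (i + d)"] inv[of "i + d"] by (auto simp: K_def)
    then show ?case using Suc by simp
  qed
  have decle: "i \<le> j \<Longrightarrow> K j \<subseteq> K i" for i j
    using dec[of i "j - i"] by simp
  define F where "F = {Q \<in> fi_submods R M. N \<subseteq> Q \<and> (\<forall>i. xs i \<notin> Q)}"
  have NF: "N \<in> F" using Nfi inv by (auto simp: F_def)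
  have "\<forall>C\<in>chains F. \<exists>U\<in>F. \<forall>X\<in>C. X \<subseteq> U"
  proof
    fix C assume C: "C \<in> chains F"
    show "\<exists>U\<in>F. \<forall>X\<in>C. X \<subseteq> U"
    proof (cases "C = {}")
      case True then show ?thesis using NF by blast
    next
      case False
      have CF: "C \<subseteq> F" and ch: "\<And>X Y. X \<in> C \<Longrightarrow> Y \<in> C \<Longrightarrow> X \<subseteq> Y \<or> Y \<subseteq> X"
        using C by (auto simp: chains_def chain_subset_def)
      have Xfi: "X \<in> fi_submods R M" if "X \<in> C" for X using CF that by (auto simp: F_def)
      have Xsub: "submod R M X" if "X \<in> C" for X using fiD(1)[OF Xfi[OF that]] .
      obtain X0 where X0: "X0 \<in> C" using False by blast
      have sub: "submod R M (\<Union>C)"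
        unfolding submod_def
      proof (intro conjI ballI)
        show "\<Union>C \<subseteq> carrier M" using Xsub submodD(1) by blast
        show "\<zero>\<^bsub>M\<^esub> \<in> \<Union>C" using X0 submodD(2)[OF Xsub[OF X0]] by blast
      next
        fix a b assume "a \<in> \<Union>C" "b \<in> \<Union>C"
        then obtain X Y where XY: "X \<in> C" "Y \<in> C" "a \<in> X" "b \<in> Y" by blast
        show "a \<oplus>\<^bsub>M\<^esub> b \<in> \<Union>C"
        proof (cases "X \<subseteq> Y")
          case True then show ?thesis using XY submodD(3)[OF Xsub[OF XY(2)]] by blast
        next
          case False then have "Y \<subseteq> X" using ch XY by blast
          then show ?thesis using XY submodD(3)[OF Xsub[OF XY(1)]] by blast
        qed
      next
        fix r a assume r: "r \<in> carrier R" and "a \<in> \<Union>C"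
        then obtain X where X: "X \<in> C" "a \<in> X" by blast
        then show "r \<odot>\<^bsub>M\<^esub> a \<in> \<Union>C" using submodD(4)[OF Xsub[OF X(1)] r X(2)] by blast
      qed
      have "\<Union>C \<in> fi_submods R M"
      proof (rule fiI[OF sub])
        fix f a assume f: "f \<in> lhom R M M" and "a \<in> \<Union>C"
        then obtain X where X: "X \<in> C" "a \<in> X" by blast
        then show "f a \<in> \<Union>C" using fiD(2)[OF Xfi[OF X(1)] f X(2)] by blast
      qed
      moreover have "N \<subseteq> \<Union>C" using X0 CF by (auto simp: F_def)
      moreover have "xs i \<notin> \<Union>C" for i using CF by (auto simp: F_def)
      ultimately have "\<Union>C \<in> F" by (auto simp: F_def)
      then show ?thesis by blast
    qed
  qed
  from Zorn_Lemma2[OF this] obtain P where PF: "P \<in> F" and Pmax: "\<And>X. X \<in> F \<Longrightarrow> P \<subseteq> X \<Longrightarrow> X = P"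
    by blast
  have Pfi: "P \<in> fi_submods R M" and NP: "N \<subseteq> P" and xsP: "\<And>i. xs i \<notin> P"
    using PF by (auto simp: F_def)
  have Psub: "submod R M P" using fiD(1)[OF Pfi] .
  have Pc: "P \<subseteq> carrier M" using submodD(1)[OF Psub] .
  have catch: "\<exists>i. K i \<subseteq> splus M A P" if A: "A \<in> fi_submods R M" "\<not> A \<subseteq> P" for A
  proof -
    have Ac: "A \<subseteq> carrier M" using submodD(1)[OF fiD(1)[OF A(1)]] .
    have S: "splus M A P \<in> fi_submods R M" by (rule splus_fi[OF A(1) Pfi])
    have PS: "P \<subseteq> splus M A P" by (rule splus_ge2[OF fiD(1)[OF A(1)] Pc])
    have AS: "A \<subseteq> splus M A P" by (rule splus_ge1[OF Psub Ac])
    have "splus M A P \<noteq> P" using AS A(2) by blast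
    then have "splus M A P \<notin> F" using Pmax PS by blast
    then obtain i where "xs i \<in> splus M A P" using S NP PS by (auto simp: F_def)
    then have "K i \<subseteq> splus M A P" unfolding K_def by (rule figen_le[OF S])
    then show ?thesis by blast
  qed
  have prime: "A \<subseteq> P \<or> L \<subseteq> P" if A: "A \<in> fi_submods R M" and L: "L \<in> fi_submods R M"
    and AL: "mprod R M A L \<subseteq> P" for A L
  proof (rule ccontr)
    assume "\<not> (A \<subseteq> P \<or> L \<subseteq> P)"
    then have nA: "\<not> A \<subseteq> P" and nL: "\<not> L \<subseteq> P" by auto
    obtain i where i: "K i \<subseteq> splus M A P" using catch[OF A nA] by blast
    obtain j where j: "K j \<subseteq> splus M L P" using catch[OF L nL] by blast
    define k where "k = max i j"
    have kA: "K k \<subseteq> splus M A P" using i decle[of i k] by (auto simp: k_def)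
    have kL: "K k \<subseteq> splus M L P" using j decle[of j k] by (auto simp: k_def)
    have Ac: "A \<subseteq> carrier M" using submodD(1)[OF fiD(1)[OF A]] .
    have "mprod R M (K k) (K k) \<subseteq> P"
    proof (rule mprod_le[OF Psub])
      fix f assume f: "f \<in> lhom R M M" and fK: "f ` carrier M \<subseteq> K k"
      have "f ` carrier M \<subseteq> splus M L P" using fK kL by blast
      from lift[OF proj fiD(1)[OF L] Psub f this]
      obtain g where g: "g \<in> lhom R M M" "g ` carrier M \<subseteq> L"
        and fg: "\<And>m. m \<in> carrier M \<Longrightarrow> f m \<ominus>\<^bsub>M\<^esub> g m \<in> P" by blast
      show "f ` K k \<subseteq> P"
      proof
        fix z assume "z \<in> f ` K k"
        then obtain y where y: "y \<in> K k" "z = f y" by blast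
        then have "y \<in> splus M A P" using kA by blast
        then obtain a p where ap: "y = a \<oplus>\<^bsub>M\<^esub> p" "a \<in> A" "p \<in> P" by (auto simp: splus_def)
        have ac: "a \<in> carrier M" and pc: "p \<in> carrier M" using ap Ac Pc by auto
        have fy: "f y = f a \<oplus>\<^bsub>M\<^esub> f p" using ap homD(2)[OF f ac pc] by simp
        have fp: "f p \<in> P" by (rule fiD(2)[OF Pfi f ap(3)])
        have ga: "g a \<in> P" using mprod_ge[OF g ap(2)] AL by blast
        have "f a = (f a \<ominus>\<^bsub>M\<^esub> g a) \<oplus>\<^bsub>M\<^esub> g a"
          using minus_plus_back[OF homD(1)[OF f ac] homD(1)[OF g(1) ac]] by simp
        then have fa: "f a \<in> P" using submodD(3)[OF Psub fg[OF ac] ga] by simp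
        show "z \<in> P" using y fy submodD(3)[OF Psub fa fp] by simp
      qed
    qed
    moreover have "xs (Suc k) \<in> mprod R M (K k) (K k)"
      using step[of "xs k"] inv[of k] xsS[of k] by (simp add: K_def)
    ultimately show False using xsP by blast
  qed
  have "P \<in> LgSpec R M"
    unfolding LgSpec_def using Psub prime xsP[of 0] xs0 x by blast
  moreover have "x \<notin> P" using xsP[of 0] xs0 by simp
  ultimately show ?thesis using NP by blast
qed

end

theorem proposition4p24:
  fixes R :: "'r ring" and M :: "('r, 'a) module" and N :: "'a set"
  assumes "lmodule R M"
    and "proj_sigma R M"
    and "N \<in> fi_submods R M"
  shows "mu R M N = N \<longleftrightarrow> (semiprime_in R M N \<or> N = carrier M)"
proof -
  interpret lmod R M by unfold_locales (rule assms(1))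
  have Nfi: "N \<in> fi_submods R M" by (rule assms(3))
  have Nsub: "submod R M N" by (rule fiD(1)[OF Nfi])
  define Fam where "Fam = {K \<in> fi_submods R M. Uopen R M K \<subseteq> Uopen R M N}"
  have mu: "mu R M N = gen_submod R M (\<Union>Fam)" by (simp add: mu_def Fam_def)
  have Famc: "\<Union>Fam \<subseteq> carrier M" using submodD(1)[OF fiD(1)] by (auto simp: Fam_def)
  have NFam: "N \<in> Fam" using Nfi by (simp add: Fam_def)
  have Nmu: "N \<subseteq> mu R M N" unfolding mu using NFam gen_ge[of "\<Union>Fam"] by blast
  have muc: "mu R M N \<subseteq> carrier M" unfolding mu by (rule gen_sub_carrier[OF Famc])
  show ?thesis
  proof
    assume e: "mu R M N = N"
    show "semiprime_in R M N \<or> N = carrier M"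
    proof (cases "N = carrier M")
      case True then show ?thesis by simp
    next
      case False
      have "K \<subseteq> N" if K: "K \<in> fi_submods R M" and KK: "mprod R M K K \<subseteq> N" for K
      proof -
        have "Uopen R M K \<subseteq> Uopen R M N"
        proof
          fix P assume "P \<in> Uopen R M K"
          then have P: "P \<in> LgSpec R M" and KP: "\<not> K \<subseteq> P" by (auto simp: Uopen_def)
          have "\<not> N \<subseteq> P"
          proof
            assume "N \<subseteq> P"
            then have "mprod R M K K \<subseteq> P" using KK by blast
            then show False using P K KP by (auto simp: LgSpec_def)
          qed
          then show "P \<in> Uopen R M N" using P by (simp add: Uopen_def)
        qed
        then have "K \<in> Fam" using K by (simp add: Fam_def)
        then have "K \<subseteq> mu R M N" unfolding mu using gen_ge[of "\<Union>Fam"] by blast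
        then show ?thesis using e by simp
      qed
      then show ?thesis using False Nfi by (simp add: semiprime_in_def)
    qed
  next
    assume h: "semiprime_in R M N \<or> N = carrier M"
    show "mu R M N = N"
    proof (cases "N = carrier M")
      case True then show ?thesis using Nmu muc by simp
    next
      case False
      then have sp: "semiprime_in R M N" using h by simp
      have "\<Union>Fam \<subseteq> N"
      proof
        fix z assume "z \<in> \<Union>Fam"
        then obtain K where K: "K \<in> Fam" "z \<in> K" by blast
        show "z \<in> N"
        proof (rule ccontr)
          assume zN: "z \<notin> N"
          have zc: "z \<in> carrier M" using K Famc by blast
          obtain P where P: "P \<in> LgSpec R M" "N \<subseteq> P" "z \<notin> P"
            using prime_exists[OF assms(2) sp zc zN] by blast
          have "P \<in> Uopen R M K" using P K by (auto simp: Uopen_def)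
          then have "P \<in> Uopen R M N" using K by (auto simp: Fam_def)
          then show False using P by (simp add: Uopen_def)
        qed
      qed
      then have "mu R M N \<subseteq> N" unfolding mu by (rule gen_le[OF Nsub])
      then show ?thesis using Nmu by blast
    qed
  qed
qed


end
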